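(* Let $X$ be convex and let $f$ be $\alpha$-robustly quasiconvex for some $\alpha>0$, with $X\subset\operatorname{dom}f$. If $X^\infty\cap\mathcal{K}_q(f)=\{0\}$, then the optimal value function $\mu$ is continuous at $0$.
   Context: Standing assumptions: $f:\mathbb{R}^n\to\mathbb{R}\cup\{\pm\infty\}$ is proper (never $-\infty$ and finite at some point) and lower semicontinuous; $X\subset\mathbb{R}^n$ is a nonempty closed set with $\operatorname{dom}f\cap X$ unbounded. $f$ is $\alpha$-robustly quasiconvex ($\alpha\ge0$) if $x\mapsto f(x)+\langle u,x\rangle$ is quasiconvex for every $u$ in the open ball $\mathbb{B}_\alpha$ of radius $\alpha$ about $0$ (quasiconvex: $g(\lambda x+(1-\lambda)y)\le\max\{g(x),g(y)\}$ for $x,y\in\operatorname{dom}g$, $\lambda\in[0,1]$). $X^\infty=\{u:\exists t_k\to+\infty,\ \exists x_k\in X,\ x_k/t_k\to u\}$. $f^\infty_q(u)=\sup_{x\in\operatorname{dom}f}\sup_{t>0}\frac{f(x+tu)-f(x)}{t}$, $\mathcal{K}_q(f)=\{d: f^\infty_q(d)\le0\}$. $f_u(x)=f(x)-\langle u,x\rangle$ and $\mu(u)=\inf_{x\in X}f_u(x)$; continuity of $\mu$ at $0$ means $\lim_{u\to0}\mu(u)=\mu(0)$. *)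

theory Defs
  imports "HOL-Analysis.Analysis" "HOL-Library.Extended_Real"
begin

definition edom :: "('a \<Rightarrow> ereal) \<Rightarrow> 'a set" where
  "edom f = {x. f x < \<infinity>}"

definition proper_fun :: "('a \<Rightarrow> ereal) \<Rightarrow> bool" where
  "proper_fun f \<longleftrightarrow> (\<forall>x. f x \<noteq> -\<infinity>) \<and> (\<exists>x. f x < \<infinity>)"

definition lsc_fun :: "('a::topological_space \<Rightarrow> ereal) \<Rightarrow> bool" where
  "lsc_fun f \<longleftrightarrow> (\<forall>x c. c < f x \<longrightarrow> (\<forall>\<^sub>F y in at x. c < f y))"

definition quasiconvex_fun :: "('a::real_vector \<Rightarrow> ereal) \<Rightarrow> bool" where
  "quasiconvex_fun g \<longleftrightarrow>
     (\<forall>x\<in>edom g. \<forall>y\<in>edom g. \<forall>l::real. 0 \<le> l \<and> l \<le> 1 \<longrightarrow>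
        g (l *\<^sub>R x + (1 - l) *\<^sub>R y) \<le> max (g x) (g y))"

definition robustly_quasiconvex :: "real \<Rightarrow> ('a::real_inner \<Rightarrow> ereal) \<Rightarrow> bool" where
  "robustly_quasiconvex \<alpha> f \<longleftrightarrow>
     (\<forall>u. u \<in> ball 0 \<alpha> \<longrightarrow> quasiconvex_fun (\<lambda>x. f x + ereal (inner u x)))"

definition asymptotic_cone :: "'a::real_normed_vector set \<Rightarrow> 'a set" where
  "asymptotic_cone X = {u. \<exists>t::nat \<Rightarrow> real. \<exists>x::nat \<Rightarrow> 'a.
      filterlim t at_top sequentially \<and> (\<forall>k. x k \<in> X) \<and>
      ((\<lambda>k. x k /\<^sub>R t k) \<longlonglongrightarrow> u)}"

definition q_asymptotic :: "('a::real_vector \<Rightarrow> ereal) \<Rightarrow> 'a \<Rightarrow> ereal" where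
  "q_asymptotic f u =
     (SUP x\<in>edom f. SUP t\<in>{0<..}. (f (x + t *\<^sub>R u) - f x) / ereal t)"

definition Kq :: "('a::real_vector \<Rightarrow> ereal) \<Rightarrow> 'a set" where
  "Kq f = {d. q_asymptotic f d \<le> 0}"

definition opt_value :: "('a::real_inner \<Rightarrow> ereal) \<Rightarrow> 'a set \<Rightarrow> 'a \<Rightarrow> ereal" where
  "opt_value f X u = (INF x\<in>X. f x - ereal (inner u x))"

end

theory Submission
  imports Defs
begin

lemma keyA1:
  fixes f :: "'a::euclidean_space \<Rightarrow> ereal" and y v :: "nat \<Rightarrow> 'a"
  assumes hprop: "proper_fun f" and lsc: "lsc_fun f"
    and rq: "robustly_quasiconvex \<alpha> f"
    and ydom: "\<And>n. y n \<in> edom f"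
    and yc: "\<And>n. f (y n) \<le> ereal (c + inner (v n) (y n))"
    and v0: "v \<longlonglongrightarrow> 0"
    and yinf: "filterlim (\<lambda>n. norm (y n)) at_top sequentially"
    and wd: "(\<lambda>n. y n /\<^sub>R norm (y n)) \<longlonglongrightarrow> d"
    and nd: "norm d = 1"
    and x: "x \<in> edom f" and fx: "f x = ereal fx" and t: "t > 0"
    and b: "0 < \<beta>" "\<beta> < \<alpha>"
  shows "f (x + t *\<^sub>R d) \<le> ereal (fx + \<beta> * t)"
proof (rule ccontr)
  define z where "z = x + t *\<^sub>R d"
  assume "\<not> f (x + t *\<^sub>R d) \<le> ereal (fx + \<beta> * t)"
  hence "ereal (fx + \<beta> * t) < f z" by (simp add: z_def)
  then obtain c' where c1: "ereal (fx + \<beta> * t) < ereal c'" and c2: "ereal c' < f z"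
    using ereal_dense2 by blast
  define u where "u = - (\<beta> *\<^sub>R d)"
  have "u \<in> ball 0 \<alpha>" using b nd by (simp add: u_def)
  hence qc: "quasiconvex_fun (\<lambda>x. f x + ereal (inner u x))" using rq
    unfolding robustly_quasiconvex_def by blast
  define w where "w n = y n /\<^sub>R norm (y n)" for n
  define l where "l n = t / norm (y n)" for n
  define p where "p n = l n *\<^sub>R y n + (1 - l n) *\<^sub>R x" for n
  have ev1: "eventually (\<lambda>n. t \<le> norm (y n)) sequentially"
    using yinf by (simp add: filterlim_at_top)
  have l0: "l \<longlonglongrightarrow> 0" unfolding l_def
    by (rule tendsto_divide_0[OF tendsto_const filterlim_at_top_imp_at_infinity[OF yinf]])
  have peq: "p n = t *\<^sub>R w n + x - l n *\<^sub>R x" for n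
    by (simp add: p_def w_def l_def algebra_simps divide_inverse)
  have pz: "p \<longlonglongrightarrow> z"
  proof -
    have "(\<lambda>n. t *\<^sub>R w n + x - l n *\<^sub>R x) \<longlonglongrightarrow> t *\<^sub>R d + x - 0 *\<^sub>R x"
      using wd l0 unfolding w_def by (intro tendsto_intros) auto
    moreover have "p = (\<lambda>n. t *\<^sub>R w n + x - l n *\<^sub>R x)" using peq by (rule ext)
    ultimately show ?thesis by (simp add: z_def algebra_simps)
  qed
  define Q where "Q n = (c - fx + \<beta> * inner d x) / norm (y n) + inner (v n) (w n) - \<beta> * inner d (w n)" for n
  have Qlim: "Q \<longlonglongrightarrow> 0 + inner 0 d - \<beta> * inner d d"
    unfolding Q_def
    by (intro tendsto_intros tendsto_divide_0[OF tendsto_const filterlim_at_top_imp_at_infinity[OF yinf]])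
       (use v0 wd in \<open>auto simp: w_def\<close>)
  have "inner d d = 1" using nd by (simp add: power2_norm_eq_inner[symmetric])
  hence "Q \<longlonglongrightarrow> - \<beta>" using Qlim by simp
  hence evQ: "eventually (\<lambda>n. Q n < 0) sequentially"
    using b by (intro order_tendstoD) auto
  have ev2: "eventually (\<lambda>n. c + inner (v n) (y n) - \<beta> * inner d (y n) \<le> fx - \<beta> * inner d x) sequentially"
    using evQ ev1
  proof eventually_elim
    case (elim n)
    hence ny: "norm (y n) > 0" using t by linarith
    have "Q n * norm (y n) = c - fx + \<beta> * inner d x + inner (v n) (y n) - \<beta> * inner d (y n)"
      using ny by (simp add: Q_def w_def field_simps)
    moreover have "Q n * norm (y n) < 0" using elim ny by (simp add: mult_neg_pos)
    ultimately show ?case by linarith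
  qed
  have edg: "edom (\<lambda>x. f x + ereal (inner u x)) = edom f"
    unfolding edom_def by auto
  have ev3: "eventually (\<lambda>n. f (p n) \<le> ereal (fx - \<beta> * inner d x + \<beta> * inner d (p n))) sequentially"
    using ev1 ev2
  proof eventually_elim
    case (elim n)
    have l01: "0 \<le> l n" "l n \<le> 1" using elim t by (auto simp: l_def divide_le_eq_1)
    have "f (p n) + ereal (inner u (p n)) \<le> max (f (y n) + ereal (inner u (y n))) (f x + ereal (inner u x))"
      using qc ydom x l01 unfolding quasiconvex_fun_def edg p_def by blast
    moreover have "f (y n) + ereal (inner u (y n)) \<le> ereal (c + inner (v n) (y n)) + ereal (inner u (y n))"
      using yc by (intro add_right_mono) auto
    moreover have "ereal (c + inner (v n) (y n)) + ereal (inner u (y n)) \<le> ereal (fx - \<beta> * inner d x)" using elim by (simp add: u_def)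
    moreover have "f x + ereal (inner u x) = ereal (fx - \<beta> * inner d x)" by (simp add: fx u_def)
    ultimately have "f (p n) + ereal (inner u (p n)) \<le> ereal (fx - \<beta> * inner d x)"
      by (metis (no_types, lifting) max.absorb2 max.bounded_iff order_trans)
    thus ?case by (cases "f (p n)") (auto simp: u_def)
  qed
  have "eventually (\<lambda>y. c' < f y) (at z)" using lsc c2 unfolding lsc_fun_def by blast
  hence "eventually (\<lambda>y. c' < f y) (nhds z)"
    unfolding eventually_at_filter using c2 by (auto elim: eventually_mono)
  hence ev4: "eventually (\<lambda>n. c' < f (p n)) sequentially"
    using pz unfolding filterlim_iff by blast
  have "(\<lambda>n. fx - \<beta> * inner d x + \<beta> * inner d (p n)) \<longlonglongrightarrow> fx - \<beta> * inner d x + \<beta> * inner d z"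
    by (intro tendsto_intros pz)
  moreover have "fx - \<beta> * inner d x + \<beta> * inner d z = fx + \<beta> * t"
    using \<open>inner d d = 1\<close> by (simp add: z_def inner_add_right algebra_simps)
  ultimately have ev5: "eventually (\<lambda>n. fx - \<beta> * inner d x + \<beta> * inner d (p n) < c') sequentially"
    using c1 by (intro order_tendstoD) auto
  have "eventually (\<lambda>n. False) sequentially" using ev3 ev4 ev5
    by eventually_elim (metis ereal_less_eq(3) leD less_le_trans less_imp_le order.strict_trans2)
  thus False by simp
qed


lemma keyA:
  fixes f :: "'a::euclidean_space \<Rightarrow> ereal" and y v :: "nat \<Rightarrow> 'a"
  assumes hprop: "proper_fun f" and lsc: "lsc_fun f" and a: "\<alpha> > 0"
    and rq: "robustly_quasiconvex \<alpha> f"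
    and ydom: "\<And>n. y n \<in> edom f"
    and yc: "\<And>n. f (y n) \<le> ereal (c + inner (v n) (y n))"
    and v0: "v \<longlonglongrightarrow> 0"
    and yinf: "filterlim (\<lambda>n. norm (y n)) at_top sequentially"
    and wd: "(\<lambda>n. y n /\<^sub>R norm (y n)) \<longlonglongrightarrow> d"
    and nd: "norm d = 1"
  shows "d \<in> Kq f"
proof -
  have main: "f (x + t *\<^sub>R d) \<le> f x" if x: "x \<in> edom f" and t: "t > 0" for x t
  proof -
    obtain fx where fx: "f x = ereal fx"
      using x hprop unfolding edom_def proper_fun_def by (cases "f x") auto
    have B: "f (x + t *\<^sub>R d) \<le> ereal (fx + \<beta> * t)" if "0 < \<beta>" "\<beta> < \<alpha>" for \<beta>
      using keyA1[OF hprop lsc rq ydom yc v0 yinf wd nd x fx t that] .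
    show ?thesis
    proof (cases "f (x + t *\<^sub>R d)")
      case (real r)
      show ?thesis
      proof (rule ccontr)
        assume "\<not> ?thesis"
        hence rfx: "r > fx" using real fx by simp
        define \<beta> where "\<beta> = min (\<alpha>/2) ((r - fx) / (2*t))"
        have b0: "0 < \<beta>" "\<beta> < \<alpha>" using a rfx t by (auto simp: \<beta>_def)
        have "\<beta> * t \<le> (r - fx) / (2*t) * t" using t by (intro mult_right_mono) (auto simp: \<beta>_def)
        also have "\<dots> = (r - fx)/2" using t by (simp add: field_simps)
        finally have "fx + \<beta> * t < r" using rfx by (simp add: field_simps)
        thus False using B[OF b0] real by simp
      qed
    next
      case PInf
      thus ?thesis using B[of "\<alpha>/2"] a by simp
    next
      case MInf
      thus ?thesis using hprop unfolding proper_fun_def by blast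
    qed
  qed
  have "(f (x + t *\<^sub>R d) - f x) / ereal t \<le> 0" if xt: "x \<in> edom f" "t > 0" for x t
  proof -
    obtain fx where fx: "f x = ereal fx"
      using xt hprop unfolding edom_def proper_fun_def by (cases "f x") auto
    have le: "f (x + t *\<^sub>R d) \<le> ereal fx" using main[OF xt] fx by simp
    show ?thesis
    proof (cases "f (x + t *\<^sub>R d)")
      case (real r)
      thus ?thesis using le fx xt(2) by (simp add: divide_nonpos_pos)
    next
      case PInf thus ?thesis using le by simp
    next
      case MInf
      thus ?thesis using hprop unfolding proper_fun_def by blast
    qed
  qed
  thus ?thesis unfolding Kq_def q_asymptotic_def
    by (auto intro!: SUP_least)
qed


theorem mainTheorem14:
  fixes f :: "'a::euclidean_space \<Rightarrow> ereal" and X :: "'a set" and \<alpha> :: real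
  assumes "proper_fun f" and "lsc_fun f"
    and "closed X" and "X \<noteq> {}" and "\<not> bounded (edom f \<inter> X)"
    and "convex X"
    and "\<alpha> > 0" and "robustly_quasiconvex \<alpha> f"
    and "X \<subseteq> edom f"
    and "asymptotic_cone X \<inter> Kq f = {0}"
  shows "(opt_value f X \<longlongrightarrow> opt_value f X 0) (at 0)"
proof -
  note hprop = assms(1) and lsc = assms(2) and a = assms(7) and rq = assms(8) and Xd = assms(9)
    and cone = assms(10)
  have freal: "f x = ereal (real_of_ereal (f x))" if "x \<in> X" for x
    using that Xd hprop unfolding edom_def proper_fun_def by (cases "f x") auto
  have mu0: "opt_value f X 0 = (INF x\<in>X. f x)" by (simp add: opt_value_def)
  have lower: "opt_value f X 0 \<le> f x" if "x \<in> X" for x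
    unfolding mu0 using that by (rule INF_lower)
  show ?thesis
  proof (rule order_tendstoI)
    fix b assume "opt_value f X 0 < b"
    then obtain x where x: "x \<in> X" "f x < b" unfolding mu0 INF_less_iff by blast
    define r where "r = real_of_ereal (f x)"
    have fr: "f x = ereal r" using freal[OF x(1)] by (simp add: r_def)
    have "((\<lambda>u. ereal (r - inner u x)) \<longlongrightarrow> ereal (r - inner 0 x)) (at 0)"
      unfolding lim_ereal by (intro tendsto_intros)
    hence "eventually (\<lambda>u. ereal (r - inner u x) < b) (at 0)"
      using x(2) fr by (intro order_tendstoD) auto
    thus "eventually (\<lambda>u. opt_value f X u < b) (at 0)"
    proof eventually_elim
      case (elim u)
      have "opt_value f X u \<le> f x - ereal (inner u x)"
        unfolding opt_value_def using x(1) by (rule INF_lower)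
      also have "\<dots> = ereal (r - inner u x)" by (simp add: fr)
      finally show ?case using elim by simp
    qed
  next
    fix a assume aless: "a < opt_value f X 0"
    show "eventually (\<lambda>u. a < opt_value f X u) (at 0)"
    proof (rule ccontr)
      assume ne: "\<not> ?thesis"
      have "\<exists>u. norm u < 1 / real (Suc n) \<and> opt_value f X u \<le> a" for n
      proof -
        have "\<not> (\<forall>u. u \<noteq> 0 \<and> dist u 0 < 1 / real (Suc n) \<longrightarrow> a < opt_value f X u)"
        proof
          assume H: "\<forall>u. u \<noteq> 0 \<and> dist u 0 < 1 / real (Suc n) \<longrightarrow> a < opt_value f X u"
          have "\<exists>e>0. \<forall>u\<in>UNIV. u \<noteq> 0 \<and> dist u 0 < e \<longrightarrow> a < opt_value f X u"
            by (rule exI[of _ "1 / real (Suc n)"]) (use H in auto)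
          thus False using ne unfolding eventually_at by blast
        qed
        thus ?thesis by (auto simp: not_less)
      qed
      then obtain u where u: "\<And>n. norm (u n) < 1 / real (Suc n)" "\<And>n. opt_value f X (u n) \<le> a"
        by metis
      have u0: "u \<longlonglongrightarrow> 0" using u(1) by (rule LIMSEQ_norm_0)
      obtain x0 where x0: "x0 \<in> X" using assms(4) by blast
      have "opt_value f X 0 < \<infinity>"
      proof -
        have "opt_value f X 0 \<le> ereal (real_of_ereal (f x0))" using lower[OF x0] freal[OF x0] by simp
        thus ?thesis using le_less_trans by fastforce
      qed
      then obtain m where m: "opt_value f X 0 = ereal m"
        using aless by (cases "opt_value f X 0") auto
      obtain c where c1: "a < ereal c" and c2: "ereal c < ereal m"
        using aless m ereal_dense2 by metis
      have "\<exists>x\<in>X. f x - ereal (inner (u n) x) < ereal c" for n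
      proof -
        have "opt_value f X (u n) < ereal c" using u(2)[of n] c1 by simp
        thus ?thesis unfolding opt_value_def INF_less_iff .
      qed
      then obtain x where xX: "\<And>n. x n \<in> X"
        and xc: "\<And>n. f (x n) - ereal (inner (u n) (x n)) < ereal c" by metis
      define fr where "fr y = real_of_ereal (f y)" for y
      have frx: "f (x n) = ereal (fr (x n))" for n using freal[OF xX] by (simp add: fr_def)
      have xc': "fr (x n) < c + inner (u n) (x n)" for n using xc[of n] by (simp add: frx)
      have xm: "m \<le> fr (x n)" for n using lower[OF xX[of n]] by (simp add: m frx)
      have xinf: "filterlim (\<lambda>n. norm (x n)) at_top sequentially"
        unfolding filterlim_at_top
      proof
        fix B :: real
        define B' where "B' = max B 1"
        have "eventually (\<lambda>n. norm (u n) < (m - c) / B') sequentially"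
        proof (rule order_tendstoD(2))
          show "(\<lambda>n. norm (u n)) \<longlonglongrightarrow> 0" using tendsto_norm_zero[OF u0] .
          show "0 < (m - c) / B'" using c2 by (auto simp: B'_def)
        qed
        thus "eventually (\<lambda>n. B \<le> norm (x n)) sequentially"
        proof eventually_elim
          case (elim n)
          show ?case
          proof (rule ccontr)
            assume "\<not> B \<le> norm (x n)"
            hence nb: "norm (x n) \<le> B'" by (simp add: B'_def)
            have "inner (u n) (x n) \<le> norm (u n) * norm (x n)" by (rule norm_cauchy_schwarz)
            also have "\<dots> \<le> norm (u n) * B'" using nb by (intro mult_left_mono) auto
            also have "\<dots> < (m - c)" using elim by (simp add: B'_def pos_less_divide_eq)
            finally show False using xc'[of n] xm[of n] by linarith
          qed
        qed
      qed
      define w where "w n = x n /\<^sub>R norm (x n)" for n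
      have "w n \<in> cball 0 1" for n by (cases "x n = 0") (simp_all add: w_def)
      then obtain d r where d: "d \<in> cball 0 1" and r: "strict_mono r" and wr: "(w \<circ> r) \<longlonglongrightarrow> d"
        using seq_compactE[OF compact_imp_seq_compact[OF compact_cball]] by metis
      have xinfr: "filterlim (\<lambda>n. norm (x (r n))) at_top sequentially"
        using filterlim_compose[OF xinf filterlim_subseq[OF r]] by (simp add: o_def)
      have "eventually (\<lambda>n. norm (w (r n)) = 1) sequentially"
      proof -
        have "eventually (\<lambda>n. 1 \<le> norm (x (r n))) sequentially"
          using xinfr unfolding filterlim_at_top by blast
        thus ?thesis
        proof eventually_elim
          case (elim n)
          hence "norm (x (r n)) \<noteq> 0" by linarith
          thus ?case by (simp add: w_def)
        qed
      qed
      hence "(\<lambda>n. norm (w (r n))) \<longlonglongrightarrow> 1" by (rule tendsto_eventually)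
      moreover have "(\<lambda>n. norm (w (r n))) \<longlonglongrightarrow> norm d" using tendsto_norm[OF wr] by (simp add: o_def)
      ultimately have nd: "norm d = 1" using LIMSEQ_unique by metis
      have "d \<in> Kq f"
      proof (rule keyA[OF hprop lsc a rq])
        show "x (r n) \<in> edom f" for n using xX Xd by blast
        show "f (x (r n)) \<le> ereal (c + inner (u (r n)) (x (r n)))" for n
          using xc'[of "r n"] frx[of "r n"] by simp
        show "(\<lambda>n. u (r n)) \<longlonglongrightarrow> 0" using LIMSEQ_subseq_LIMSEQ[OF u0 r] by (simp add: o_def)
        show "filterlim (\<lambda>n. norm (x (r n))) at_top sequentially" by (rule xinfr)
        show "(\<lambda>n. x (r n) /\<^sub>R norm (x (r n))) \<longlonglongrightarrow> d" using wr by (simp add: o_def w_def)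
        show "norm d = 1" by (rule nd)
      qed
      moreover have "d \<in> asymptotic_cone X"
        unfolding asymptotic_cone_def mem_Collect_eq
      proof (intro exI conjI allI)
        show "filterlim (\<lambda>n. norm (x (r n))) at_top sequentially" by (rule xinfr)
        show "x (r k) \<in> X" for k by (rule xX)
        show "(\<lambda>k. x (r k) /\<^sub>R norm (x (r k))) \<longlonglongrightarrow> d" using wr by (simp add: o_def w_def)
      qed
      ultimately have "d = 0" using cone by blast
      thus False using nd by simp
    qed
  qed
qed

end
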